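(* Let $g_\theta:\mathbb{R}^{D_Z}\to\mathbb{R}^{D}$ be a family of maps differentiable in the parameter $\theta$, let $p_Z$ be a distribution on $\mathbb{R}^{D_Z}$, and let $\sigma>0$. For $\boldsymbol{z}\sim p_Z$ and independent $\epsilon\sim\mathcal{N}(\boldsymbol{0},\mathcal{I})$ set $\boldsymbol{x}_0=g_\theta(\boldsymbol{z})$ and $\boldsymbol{x}_\sigma=\boldsymbol{x}_0+\sigma\epsilon$; let $p_{0,\theta}$ be the law of $\boldsymbol{x}_0$, $p_{\theta,\sigma}$ the density of $\boldsymbol{x}_\sigma$, $p(\boldsymbol{x}_\sigma\mid\boldsymbol{x}_0)=\mathcal{N}(\boldsymbol{x}_\sigma;\boldsymbol{x}_0,\sigma^2\mathcal{I})$, and $\boldsymbol{s}_{\theta,\sigma}(\boldsymbol{x})=\nabla_{\boldsymbol{x}}\log p_{\theta,\sigma}(\boldsymbol{x})$. Let $\boldsymbol{s}_q:\mathbb{R}^D\to\mathbb{R}^D$ be any differentiable vector field. For parameters $\theta,\theta'$ define $$F(\theta,\theta')=\mathbb{E}_{\boldsymbol{z}\sim p_Z,\ \epsilon\sim\mathcal{N}(\boldsymbol{0},\mathcal{I})}\Big\{2\big[\boldsymbol{s}_q(\boldsymbol{x}_\sigma)-\boldsymbol{s}_{\theta',\sigma}(\boldsymbol{x}_\sigma)\big]^T\big[\boldsymbol{s}_{\theta',\sigma}(\boldsymbol{x}_\sigma)-\nabla_{\boldsymbol{x}_\sigma}\log p(\boldsymbol{x}_\sigma\mid\boldsymbol{x}_0)\big]\Big\},$$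 where $\boldsymbol{x}_0=g_\theta(\boldsymbol{z})$, $\boldsymbol{x}_\sigma=\boldsymbol{x}_0+\sigma\epsilon$ depend on $\theta$. Assume mild regularity conditions (differentiability of $p_{\theta,\sigma}$ and $\boldsymbol{s}_{\theta,\sigma}$ in $\theta$ and $\boldsymbol{x}$, integrability, and permissibility of exchanging differentiation and expectation). Then for every $\theta$, $$\mathbb{E}_{\boldsymbol{x}_\sigma\sim p_{\theta,\sigma}}\Big\{-2\big[\boldsymbol{s}_q(\boldsymbol{x}_\sigma)-\boldsymbol{s}_{\theta,\sigma}(\boldsymbol{x}_\sigma)\big]^T\frac{\partial}{\partial\theta}\boldsymbol{s}_{\theta,\sigma}(\boldsymbol{x}_\sigma)\Big\}=\frac{\partial}{\partial\theta}F(\theta,\theta')\Big|_{\theta'=\theta},$$ where on the left $\frac{\partial}{\partial\theta}\boldsymbol{s}_{\theta,\sigma}(\boldsymbol{x}_\sigma)$ is the derivative in $\theta$ at fixed $\boldsymbol{x}_\sigma$, and on the right the derivative is taken only through the dependence of $\boldsymbol{x}_0=g_\theta(\boldsymbol{z})$ and $\boldsymbol{x}_\sigma$ on $\theta$, with the score network parameter $\theta'$ held fixed (a "stop-gradient") and then set equal to $\theta$.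
   Context: The paper writes $\boldsymbol{s}_{\operatorname{sg}[\theta],\sigma}$ for $\boldsymbol{s}_{\theta',\sigma}$ with $\theta'$ treated as a constant (no gradient flows through it) and evaluated at $\theta'=\theta$. The inner product $[\cdot]^T\frac{\partial}{\partial\theta}\boldsymbol{s}_{\theta,\sigma}$ is the vector–Jacobian product with the $D\times\dim(\theta)$ Jacobian of $\boldsymbol{s}_{\theta,\sigma}(\boldsymbol{x})$ in $\theta$. *)

theory Defs
  imports "HOL-Probability.Probability"
begin

definition gauss_pdf :: "real \<Rightarrow> 'a::euclidean_space \<Rightarrow> 'a \<Rightarrow> real" where
  "gauss_pdf \<sigma> \<mu> x =
     (2 * pi * \<sigma>\<^sup>2) powr (- real DIM('a) / 2) * exp (- (norm (x - \<mu>))\<^sup>2 / (2 * \<sigma>\<^sup>2))"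

definition std_gauss :: "'a::euclidean_space measure" where
  "std_gauss = density lborel (\<lambda>e. ennreal (gauss_pdf 1 0 e))"

definition grad :: "('a::real_inner \<Rightarrow> real) \<Rightarrow> 'a \<Rightarrow> 'a" where
  "grad f x = (SOME D. GDERIV f x :> D)"

text \<open>Density p_{theta,sigma} of x_sigma = g_theta(z) + sigma eps, z ~ pZ, eps ~ N(0,I).\<close>
definition noised_density ::
  "('p \<Rightarrow> 'z \<Rightarrow> 'd::euclidean_space) \<Rightarrow> 'z measure \<Rightarrow> real \<Rightarrow> 'p \<Rightarrow> 'd \<Rightarrow> real" where
  "noised_density g pZ \<sigma> \<theta> x = (\<integral>z. gauss_pdf \<sigma> (g \<theta> z) x \<partial>pZ)"

definition score ::
  "('p \<Rightarrow> 'z \<Rightarrow> 'd::euclidean_space) \<Rightarrow> 'z measure \<Rightarrow> real \<Rightarrow> 'p \<Rightarrow> 'd \<Rightarrow> 'd" where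
  "score g pZ \<sigma> \<theta> x = grad (\<lambda>y. ln (noised_density g pZ \<sigma> \<theta> y)) x"

definition cond_score :: "real \<Rightarrow> 'd::euclidean_space \<Rightarrow> 'd \<Rightarrow> 'd" where
  "cond_score \<sigma> x0 x = grad (\<lambda>y. ln (gauss_pdf \<sigma> x0 y)) x"

text \<open>F(theta, theta'): x0 = g_theta(z), x_sigma = x0 + sigma eps depend on theta;
  the score network parameter theta' is a separate argument (stop-gradient).\<close>
definition F_obj ::
  "('d \<Rightarrow> 'd) \<Rightarrow> ('p \<Rightarrow> 'z \<Rightarrow> 'd::euclidean_space) \<Rightarrow> 'z measure \<Rightarrow> real \<Rightarrow> 'p \<Rightarrow> 'p \<Rightarrow> real" where
  "F_obj sq g pZ \<sigma> \<theta> \<theta>' =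
     (\<integral>ze. (let x0 = g \<theta> (fst ze); x = x0 + \<sigma> *\<^sub>R snd ze in
             2 * ((sq x - score g pZ \<sigma> \<theta>' x) \<bullet> (score g pZ \<sigma> \<theta>' x - cond_score \<sigma> x0 x)))
      \<partial>(pZ \<Otimes>\<^sub>M std_gauss))"

end

theory Submission
  imports Defs
begin

definition gE :: "real \<Rightarrow> 'a::euclidean_space \<Rightarrow> real" where
  "gE \<sigma> v = exp (- (norm v)\<^sup>2 / (2 * \<sigma>\<^sup>2))"

definition dE :: "real \<Rightarrow> 'a::euclidean_space \<Rightarrow> 'a" where
  "dE \<sigma> v = (- gE \<sigma> v / \<sigma>\<^sup>2) *\<^sub>R v"

lemma gE_pos: "gE \<sigma> v > 0" by (simp add: gE_def)
lemma gE_le1: "\<sigma> > 0 \<Longrightarrow> gE \<sigma> v \<le> 1"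
  by (simp add: gE_def)

lemma normsq_deriv: "((\<lambda>y::'a::euclidean_space. (norm y)\<^sup>2) has_derivative (\<lambda>k. 2 * (y \<bullet> k))) (at y)"
proof -
  have "((\<lambda>y::'a. y \<bullet> y) has_derivative (\<lambda>k. y \<bullet> k + k \<bullet> y)) (at y)"
    by (rule has_derivative_inner[OF has_derivative_ident has_derivative_ident])
  then show ?thesis
    by (simp add: power2_norm_eq_inner inner_commute)
qed

lemma grad_eqI: "GDERIV f x :> D \<Longrightarrow> grad f x = D"
proof -
  assume d: "GDERIV f x :> D"
  have "GDERIV f x :> grad f x" unfolding grad_def using d by (rule someI)
  hence "(\<lambda>h. h \<bullet> grad f x) = (\<lambda>h. h \<bullet> D)"
    using d unfolding gderiv_def by (rule has_derivative_unique)
  hence "(grad f x - D) \<bullet> grad f x = (grad f x - D) \<bullet> D" by metis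
  hence "(grad f x - D) \<bullet> (grad f x - D) = 0" by (simp add: inner_diff_right)
  thus ?thesis by simp
qed

lemma gE_gderiv:
  assumes "\<sigma> > 0"
  shows "GDERIV (gE \<sigma>) v :> dE \<sigma> v"
proof -
  have n: "GDERIV (\<lambda>y. (norm y)\<^sup>2) v :> (2::real) *\<^sub>R v"
    unfolding gderiv_def using normsq_deriv[of v] by (simp add: inner_commute)
  define c where "c = -1 / (2 * \<sigma>\<^sup>2)"
  have q: "GDERIV (\<lambda>y. c * (norm y)\<^sup>2) v :> c *\<^sub>R ((2::real) *\<^sub>R v)"
    using has_derivative_mult_right[OF n[unfolded gderiv_def], of c] unfolding gderiv_def
    by (simp add: inner_scaleR_right mult.assoc)
  have r: "GDERIV (\<lambda>y. exp (c * (norm y)\<^sup>2)) v :> exp (c * (norm v)\<^sup>2) *\<^sub>R (c *\<^sub>R ((2::real) *\<^sub>R v))"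
    by (rule GDERIV_DERIV_compose[OF q DERIV_exp])
  have f: "(\<lambda>y. exp (c * (norm y)\<^sup>2)) = gE \<sigma>"
    by (rule ext) (simp add: gE_def c_def)
  have g: "exp (c * (norm v)\<^sup>2) *\<^sub>R (c *\<^sub>R ((2::real) *\<^sub>R v)) = dE \<sigma> v"
    using assms by (simp add: dE_def gE_def c_def)
  show ?thesis using r unfolding f g .
qed

lemma gE_deriv:
  assumes "\<sigma> > 0"
  shows "(gE \<sigma> has_derivative (\<lambda>k. k \<bullet> dE \<sigma> v)) (at v)"
  using gE_gderiv[OF assms] unfolding gderiv_def .

lemma key_ineq: "\<sigma> > 0 \<Longrightarrow> gE \<sigma> v * (norm v)\<^sup>2 / \<sigma>\<^sup>2 \<le> 2"
proof -
  assume s: "\<sigma> > 0"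
  define u where "u = (norm v)\<^sup>2 / (2 * \<sigma>\<^sup>2)"
  have "u \<le> exp u" using exp_ge_add_one_self[of u] by linarith
  hence "exp (-u) * u \<le> 1"
    by (simp add: exp_minus field_simps)
  moreover have "gE \<sigma> v * (norm v)\<^sup>2 / \<sigma>\<^sup>2 = 2 * (exp (-u) * u)"
    using s by (simp add: gE_def u_def field_simps)
  ultimately show ?thesis by linarith
qed

lemma dE_norm: assumes "\<sigma> > 0" shows "norm (dE \<sigma> v) \<le> 3 / \<sigma>"
proof -
  have a: "0 \<le> (norm v - \<sigma>)\<^sup>2" by simp
  have b: "(norm v - \<sigma>)\<^sup>2 = (norm v)\<^sup>2 + \<sigma>\<^sup>2 - 2 * (\<sigma> * norm v)"
    by (simp add: power2_eq_square algebra_simps)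
  have c: "0 \<le> \<sigma> * norm v" using assms by simp
  have "\<sigma> * norm v \<le> \<sigma>\<^sup>2 + (norm v)\<^sup>2"
    using a b c by linarith
  hence nv: "norm v \<le> \<sigma> + (norm v)\<^sup>2 / \<sigma>"
    using assms by (simp add: field_simps power2_eq_square)
  have "gE \<sigma> v * norm v \<le> gE \<sigma> v * (\<sigma> + (norm v)\<^sup>2 / \<sigma>)"
    using nv gE_pos[of \<sigma> v] by (intro mult_left_mono) auto
  also have "\<dots> = gE \<sigma> v * \<sigma> + \<sigma> * (gE \<sigma> v * (norm v)\<^sup>2 / \<sigma>\<^sup>2)"
    using assms by (simp add: distrib_left power2_eq_square)
  also have "\<dots> \<le> \<sigma> + \<sigma> * 2"
  proof -
    have "gE \<sigma> v * \<sigma> \<le> 1 * \<sigma>" using gE_le1[OF assms] assms by (intro mult_right_mono) auto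
    moreover have "\<sigma> * (gE \<sigma> v * (norm v)\<^sup>2 / \<sigma>\<^sup>2) \<le> \<sigma> * 2"
      using key_ineq[OF assms] assms by (intro mult_left_mono) auto
    ultimately show ?thesis by linarith
  qed
  finally have "gE \<sigma> v * norm v \<le> 3 * \<sigma>" by simp
  hence "gE \<sigma> v * norm v / \<sigma>\<^sup>2 \<le> 3 * \<sigma> / \<sigma>\<^sup>2"
    using assms by (intro divide_right_mono) auto
  moreover have "norm (dE \<sigma> v) = gE \<sigma> v * norm v / \<sigma>\<^sup>2"
    using gE_pos[of \<sigma> v] by (simp add: dE_def)
  moreover have "3 * \<sigma> / \<sigma>\<^sup>2 = 3 / \<sigma>" using assms by (simp add: power2_eq_square)
  ultimately show ?thesis by simp
qed

lemma dE_eq: "dE \<sigma> = (\<lambda>y. ((-1/\<sigma>\<^sup>2) * gE \<sigma> y) *\<^sub>R y)"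
  by (rule ext) (simp add: dE_def)

lemma dE_deriv:
  assumes "\<sigma> > 0"
  shows "(dE \<sigma> has_derivative (\<lambda>k. ((-1/\<sigma>\<^sup>2) * gE \<sigma> v) *\<^sub>R k + ((-1/\<sigma>\<^sup>2) * (k \<bullet> dE \<sigma> v)) *\<^sub>R v)) (at v)"
  unfolding dE_eq[of \<sigma>]
  using has_derivative_scaleR[OF has_derivative_mult_right[OF gE_deriv[OF assms], of "-1/\<sigma>\<^sup>2"] has_derivative_ident]
  by (simp add: dE_eq)

lemma dE_deriv_bound:
  assumes "\<sigma> > 0"
  shows "norm (((-1/\<sigma>\<^sup>2) * gE \<sigma> v) *\<^sub>R k + ((-1/\<sigma>\<^sup>2) * (k \<bullet> dE \<sigma> v)) *\<^sub>R v) \<le> 3 / \<sigma>\<^sup>2 * norm k"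
proof -
  have s2: "\<sigma>\<^sup>2 > 0" using assms by simp
  have t: "norm (((-1/\<sigma>\<^sup>2) * gE \<sigma> v) *\<^sub>R k + ((-1/\<sigma>\<^sup>2) * (k \<bullet> dE \<sigma> v)) *\<^sub>R v)
     \<le> norm (((-1/\<sigma>\<^sup>2) * gE \<sigma> v) *\<^sub>R k) + norm (((-1/\<sigma>\<^sup>2) * (k \<bullet> dE \<sigma> v)) *\<^sub>R v)"
    by (rule norm_triangle_ineq)
  have a: "norm (((-1/\<sigma>\<^sup>2) * gE \<sigma> v) *\<^sub>R k) = gE \<sigma> v / \<sigma>\<^sup>2 * norm k"
    using gE_pos[of \<sigma> v] s2 by (simp add: abs_mult)
  have b: "norm (((-1/\<sigma>\<^sup>2) * (k \<bullet> dE \<sigma> v)) *\<^sub>R v) = \<bar>k \<bullet> dE \<sigma> v\<bar> * norm v / \<sigma>\<^sup>2"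
    using s2 by (simp add: abs_mult)
  have c0: "\<bar>k \<bullet> dE \<sigma> v\<bar> * norm v \<le> norm k * norm (dE \<sigma> v) * norm v"
    by (intro mult_right_mono Cauchy_Schwarz_ineq2) auto
  have c: "\<bar>k \<bullet> dE \<sigma> v\<bar> * norm v / \<sigma>\<^sup>2 \<le> norm k * (norm (dE \<sigma> v) * norm v) / \<sigma>\<^sup>2"
    using divide_right_mono[OF c0, of "\<sigma>\<^sup>2"] s2 by (simp add: mult.assoc)
  have d: "norm (dE \<sigma> v) * norm v = gE \<sigma> v * (norm v)\<^sup>2 / \<sigma>\<^sup>2"
    using gE_pos[of \<sigma> v] by (simp add: dE_def power2_eq_square)
  have e: "norm k * (gE \<sigma> v * (norm v)\<^sup>2 / \<sigma>\<^sup>2) / \<sigma>\<^sup>2 \<le> norm k * 2 / \<sigma>\<^sup>2"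
    using key_ineq[OF assms] s2 by (intro mult_left_mono divide_right_mono) auto
  have f: "gE \<sigma> v / \<sigma>\<^sup>2 * norm k \<le> 1 / \<sigma>\<^sup>2 * norm k"
    using gE_le1[OF assms] s2 by (intro mult_right_mono divide_right_mono) auto
  have g: "1 / \<sigma>\<^sup>2 * norm k + norm k * 2 / \<sigma>\<^sup>2 = 3 / \<sigma>\<^sup>2 * norm k"
    by (simp add: field_simps)
  show ?thesis using t a b c[unfolded d] e f g by linarith
qed

lemma dE_lip:
  assumes "\<sigma> > 0"
  shows "norm (dE \<sigma> w - dE \<sigma> v) \<le> 3 / \<sigma>\<^sup>2 * norm (w - v)"
proof (rule differentiable_bound[where S=UNIV])
  fix x :: 'a
  show "(dE \<sigma> has_derivative (\<lambda>k. ((-1/\<sigma>\<^sup>2) * gE \<sigma> x) *\<^sub>R k + ((-1/\<sigma>\<^sup>2) * (k \<bullet> dE \<sigma> x)) *\<^sub>R x)) (at x within UNIV)"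
    using dE_deriv[OF assms] by simp
  show "onorm (\<lambda>k. ((-1/\<sigma>\<^sup>2) * gE \<sigma> x) *\<^sub>R k + ((-1/\<sigma>\<^sup>2) * (k \<bullet> dE \<sigma> x)) *\<^sub>R x) \<le> 3 / \<sigma>\<^sup>2"
    by (rule onorm_le) (rule dE_deriv_bound[OF assms])
qed auto

lemma gE_quad:
  assumes "\<sigma> > 0"
  shows "\<bar>gE \<sigma> w - gE \<sigma> v - (w - v) \<bullet> dE \<sigma> v\<bar> \<le> 3 / \<sigma>\<^sup>2 * (norm (w - v))\<^sup>2"
proof -
  define f where "f y = gE \<sigma> y - y \<bullet> dE \<sigma> v" for y
  have "norm (f w - f v) \<le> (3 / \<sigma>\<^sup>2 * norm (w - v)) * norm (w - v)"
  proof (rule differentiable_bound[where S="closed_segment v w" and f'="\<lambda>y k. k \<bullet> dE \<sigma> y - k \<bullet> dE \<sigma> v"])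
    fix x assume "x \<in> closed_segment v w"
    have "(f has_derivative (\<lambda>k. k \<bullet> dE \<sigma> x - k \<bullet> dE \<sigma> v)) (at x)"
      unfolding f_def[abs_def]
      by (intro has_derivative_diff gE_deriv[OF assms] bounded_linear.has_derivative[OF bounded_linear_inner_left] has_derivative_ident)
    thus "(f has_derivative (\<lambda>k. k \<bullet> dE \<sigma> x - k \<bullet> dE \<sigma> v)) (at x within closed_segment v w)"
      by (rule has_derivative_at_withinI)
    have nx: "norm (x - v) \<le> norm (w - v)" using segment_bound1[OF \<open>x \<in> closed_segment v w\<close>] .
    show "onorm (\<lambda>k. k \<bullet> dE \<sigma> x - k \<bullet> dE \<sigma> v) \<le> 3 / \<sigma>\<^sup>2 * norm (w - v)"
    proof (rule onorm_le)
      fix k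
      have "norm (k \<bullet> dE \<sigma> x - k \<bullet> dE \<sigma> v) = \<bar>k \<bullet> (dE \<sigma> x - dE \<sigma> v)\<bar>"
        by (simp add: inner_diff_right)
      also have "\<dots> \<le> norm k * norm (dE \<sigma> x - dE \<sigma> v)" by (rule Cauchy_Schwarz_ineq2)
      also have "\<dots> \<le> norm k * (3 / \<sigma>\<^sup>2 * norm (x - v))"
        by (intro mult_left_mono dE_lip[OF assms]) auto
      also have "\<dots> \<le> norm k * (3 / \<sigma>\<^sup>2 * norm (w - v))"
        using nx assms by (intro mult_left_mono) auto
      finally show "norm (k \<bullet> dE \<sigma> x - k \<bullet> dE \<sigma> v) \<le> 3 / \<sigma>\<^sup>2 * norm (w - v) * norm k"
        by (simp add: mult.commute)
    qed
  qed auto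
  moreover have "f w - f v = gE \<sigma> w - gE \<sigma> v - (w - v) \<bullet> dE \<sigma> v"
    by (simp add: f_def inner_diff_left)
  ultimately show ?thesis by (simp add: power2_eq_square mult.assoc)
qed

definition gc :: "real \<Rightarrow> 'a::euclidean_space itself \<Rightarrow> real" where
  "gc \<sigma> _ = (2 * pi * \<sigma>\<^sup>2) powr (- real DIM('a) / 2)"

lemma gc_pos: "gc \<sigma> TYPE('a::euclidean_space) > 0 \<or> \<sigma> = 0"
  by (simp add: gc_def)

lemma gc_pos': "\<sigma> > 0 \<Longrightarrow> gc \<sigma> TYPE('a::euclidean_space) > 0"
  by (simp add: gc_def)

lemma gauss_gE: "gauss_pdf \<sigma> \<mu> (x::'a::euclidean_space) = gc \<sigma> TYPE('a) * gE \<sigma> (x - \<mu>)"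
  by (simp add: gauss_pdf_def gc_def gE_def)

lemma gE_cont: "\<sigma> > 0 \<Longrightarrow> continuous_on UNIV (gE \<sigma> :: 'a::euclidean_space \<Rightarrow> real)"
  using gE_deriv by (intro has_derivative_continuous_on) blast

lemma dE_cont: "\<sigma> > 0 \<Longrightarrow> continuous_on UNIV (dE \<sigma> :: 'a::euclidean_space \<Rightarrow> 'a)"
  using dE_deriv by (intro has_derivative_continuous_on) blast

lemma gE_meas: "\<sigma> > 0 \<Longrightarrow> (gE \<sigma> :: 'a::euclidean_space \<Rightarrow> real) \<in> borel_measurable borel"
  by (rule borel_measurable_continuous_onI[OF gE_cont])

lemma dE_meas: "\<sigma> > 0 \<Longrightarrow> (dE \<sigma> :: 'a::euclidean_space \<Rightarrow> 'a) \<in> borel_measurable borel"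
  by (rule borel_measurable_continuous_onI[OF dE_cont])

lemma gE_shift_gderiv:
  assumes "\<sigma> > 0"
  shows "GDERIV (\<lambda>y. gauss_pdf \<sigma> \<mu> y) x :> gc \<sigma> TYPE('a) *\<^sub>R dE \<sigma> (x - \<mu> :: 'a::euclidean_space)"
proof -
  have "((\<lambda>y. gE \<sigma> (y - \<mu>)) has_derivative (\<lambda>h. (h - 0) \<bullet> dE \<sigma> (x - \<mu>))) (at x)"
    by (rule has_derivative_compose[OF has_derivative_diff[OF has_derivative_ident has_derivative_const] gE_deriv[OF assms]])
  hence "((\<lambda>y. gc \<sigma> TYPE('a) * gE \<sigma> (y - \<mu>)) has_derivative (\<lambda>h. gc \<sigma> TYPE('a) * ((h - 0) \<bullet> dE \<sigma> (x - \<mu>)))) (at x)"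
    by (rule has_derivative_mult_right)
  thus ?thesis unfolding gderiv_def gauss_gE by simp
qed

lemma cond_score_eq:
  assumes "\<sigma> > 0"
  shows "gauss_pdf \<sigma> \<mu> x *\<^sub>R cond_score \<sigma> \<mu> x = gc \<sigma> TYPE('a) *\<^sub>R dE \<sigma> (x - \<mu> :: 'a::euclidean_space)"
proof -
  have pos: "gauss_pdf \<sigma> \<mu> x > 0" unfolding gauss_gE using gc_pos'[OF assms] gE_pos
    by (intro mult_pos_pos) auto
  have "GDERIV (\<lambda>y. ln (gauss_pdf \<sigma> \<mu> y)) x :> (inverse (gauss_pdf \<sigma> \<mu> x)) *\<^sub>R (gc \<sigma> TYPE('a) *\<^sub>R dE \<sigma> (x - \<mu>))"
    by (rule GDERIV_DERIV_compose[OF gE_shift_gderiv[OF assms] DERIV_ln[OF pos]])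
  hence "cond_score \<sigma> \<mu> x = (inverse (gauss_pdf \<sigma> \<mu> x)) *\<^sub>R (gc \<sigma> TYPE('a) *\<^sub>R dE \<sigma> (x - \<mu>))"
    unfolding cond_score_def by (rule grad_eqI)
  thus ?thesis using pos by simp
qed

lemma cond_score_norm:
  assumes "\<sigma> > 0"
  shows "cond_score \<sigma> \<mu> x = (1 / \<sigma>\<^sup>2) *\<^sub>R (\<mu> - x :: 'a::euclidean_space)"
proof -
  have pos: "gauss_pdf \<sigma> \<mu> x > 0" unfolding gauss_gE using gc_pos'[OF assms] gE_pos
    by (intro mult_pos_pos) auto
  have "gauss_pdf \<sigma> \<mu> x *\<^sub>R cond_score \<sigma> \<mu> x = gauss_pdf \<sigma> \<mu> x *\<^sub>R ((1 / \<sigma>\<^sup>2) *\<^sub>R (\<mu> - x))"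
    apply (subst cond_score_eq[OF assms])
    apply (simp only: dE_def gauss_gE scaleR_scaleR)
    by (simp add: algebra_simps)
  thus ?thesis using pos by (subst (asm) scaleR_cancel_left) auto
qed

lemma P_int:
  fixes M :: "'z measure" and G :: "'z \<Rightarrow> 'a::euclidean_space"
  assumes M: "prob_space M" and G[measurable]: "G \<in> borel_measurable M" and s: "\<sigma> > 0"
  shows "integrable M (\<lambda>z. gauss_pdf \<sigma> (G z) y)"
    and "integrable M (\<lambda>z. gc \<sigma> TYPE('a) *\<^sub>R dE \<sigma> (y - G z))"
proof -
  interpret prob_space M by fact
  have [measurable]: "gE \<sigma> \<in> borel_measurable (borel :: 'a measure)" "dE \<sigma> \<in> borel_measurable (borel :: 'a measure)"
    using gE_meas[OF s] dE_meas[OF s] by auto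
  show "integrable M (\<lambda>z. gauss_pdf \<sigma> (G z) y)"
  proof (rule integrable_const_bound[where B="gc \<sigma> TYPE('a)"])
    show "AE z in M. norm (gauss_pdf \<sigma> (G z) y) \<le> gc \<sigma> TYPE('a)"
    proof (intro AE_I2)
      fix z
      have "gc \<sigma> TYPE('a) * gE \<sigma> (y - G z) \<le> gc \<sigma> TYPE('a) * 1"
        using gE_le1[OF s] gc_pos'[OF s, where 'a='a] by (intro mult_left_mono) auto
      moreover have "0 \<le> gc \<sigma> TYPE('a) * gE \<sigma> (y - G z)"
        using gE_pos[of \<sigma> "y - G z"] gc_pos'[OF s, where 'a='a] by simp
      ultimately show "norm (gauss_pdf \<sigma> (G z) y) \<le> gc \<sigma> TYPE('a)"
        by (simp add: gauss_gE)
    qed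
    show "(\<lambda>z. gauss_pdf \<sigma> (G z) y) \<in> borel_measurable M"
      unfolding gauss_gE by measurable
  qed
  show "integrable M (\<lambda>z. gc \<sigma> TYPE('a) *\<^sub>R dE \<sigma> (y - G z))"
  proof (rule integrable_const_bound[where B="gc \<sigma> TYPE('a) * (3 / \<sigma>)"])
    show "AE z in M. norm (gc \<sigma> TYPE('a) *\<^sub>R dE \<sigma> (y - G z)) \<le> gc \<sigma> TYPE('a) * (3 / \<sigma>)"
    proof (intro AE_I2)
      fix z
      have "gc \<sigma> TYPE('a) * norm (dE \<sigma> (y - G z)) \<le> gc \<sigma> TYPE('a) * (3 / \<sigma>)"
        using dE_norm[OF s] gc_pos'[OF s, where 'a='a] by (intro mult_left_mono) auto
      thus "norm (gc \<sigma> TYPE('a) *\<^sub>R dE \<sigma> (y - G z)) \<le> gc \<sigma> TYPE('a) * (3 / \<sigma>)"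
        using gc_pos'[OF s, where 'a='a] by simp
    qed
    show "(\<lambda>z. gc \<sigma> TYPE('a) *\<^sub>R dE \<sigma> (y - G z)) \<in> borel_measurable M"
      by measurable
  qed
qed

lemma P_deriv:
  fixes M :: "'z measure" and G :: "'z \<Rightarrow> 'a::euclidean_space"
  assumes M: "prob_space M" and G[measurable]: "G \<in> borel_measurable M" and s: "\<sigma> > 0"
  shows "((\<lambda>y. \<integral>z. gauss_pdf \<sigma> (G z) y \<partial>M) has_derivative
           (\<lambda>k. k \<bullet> (\<integral>z. gc \<sigma> TYPE('a) *\<^sub>R dE \<sigma> (x - G z) \<partial>M))) (at x)"
proof -
  interpret prob_space M by fact
  define c where "c = gc \<sigma> TYPE('a)"
  define C where "C = c * (3 / \<sigma>\<^sup>2)"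
  have c0: "c > 0" unfolding c_def by (rule gc_pos'[OF s])
  have C0: "C \<ge> 0" unfolding C_def using c0 s by simp
  define V where "V = (\<integral>z. c *\<^sub>R dE \<sigma> (x - G z) \<partial>M)"
  note ig = P_int(1)[OF M G s] and id = P_int(2)[OF M G s]
  have bnd: "\<bar>(\<integral>z. gauss_pdf \<sigma> (G z) y \<partial>M) - (\<integral>z. gauss_pdf \<sigma> (G z) x \<partial>M) - (y - x) \<bullet> V\<bar>
      \<le> C * (norm (y - x))\<^sup>2" for y
  proof -
    define f where "f z = gauss_pdf \<sigma> (G z) y - gauss_pdf \<sigma> (G z) x - (y - x) \<bullet> (c *\<^sub>R dE \<sigma> (x - G z))" for z
    have intf: "integrable M f" unfolding f_def c_def using ig id
      by (intro Bochner_Integration.integrable_diff integrable_inner_right) auto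
    have eq: "(\<integral>z. gauss_pdf \<sigma> (G z) y \<partial>M) - (\<integral>z. gauss_pdf \<sigma> (G z) x \<partial>M) - (y - x) \<bullet> V = integral\<^sup>L M f"
    proof -
      have i1: "integrable M (\<lambda>z. gauss_pdf \<sigma> (G z) y - gauss_pdf \<sigma> (G z) x)"
        using ig[of y] ig[of x] by (rule Bochner_Integration.integrable_diff)
      have i3: "integrable M (\<lambda>z. (y - x) \<bullet> (c *\<^sub>R dE \<sigma> (x - G z)))"
        using id unfolding c_def by (rule integrable_inner_right)
      have "integral\<^sup>L M f = (\<integral>z. gauss_pdf \<sigma> (G z) y - gauss_pdf \<sigma> (G z) x \<partial>M) - (\<integral>z. (y - x) \<bullet> (c *\<^sub>R dE \<sigma> (x - G z)) \<partial>M)"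
        unfolding f_def by (rule Bochner_Integration.integral_diff[OF i1 i3])
      also have "(\<integral>z. gauss_pdf \<sigma> (G z) y - gauss_pdf \<sigma> (G z) x \<partial>M) = (\<integral>z. gauss_pdf \<sigma> (G z) y \<partial>M) - (\<integral>z. gauss_pdf \<sigma> (G z) x \<partial>M)"
        using ig[of y] ig[of x] by (rule Bochner_Integration.integral_diff)
      also have "(\<integral>z. (y - x) \<bullet> (c *\<^sub>R dE \<sigma> (x - G z)) \<partial>M) = (y - x) \<bullet> V"
        unfolding V_def using id unfolding c_def by (rule integral_inner_right)
      finally show ?thesis by simp
    qed
    have pt: "norm (f z) \<le> C * (norm (y - x))\<^sup>2" for z
    proof -
      have "f z = c * (gE \<sigma> (y - G z) - gE \<sigma> (x - G z) - ((y - G z) - (x - G z)) \<bullet> dE \<sigma> (x - G z))"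
        unfolding f_def gauss_gE c_def by (simp add: algebra_simps)
      hence "norm (f z) = c * \<bar>gE \<sigma> (y - G z) - gE \<sigma> (x - G z) - ((y - G z) - (x - G z)) \<bullet> dE \<sigma> (x - G z)\<bar>"
        using c0 by (simp add: abs_mult)
      also have "\<dots> \<le> c * (3 / \<sigma>\<^sup>2 * (norm ((y - G z) - (x - G z)))\<^sup>2)"
        using c0 by (intro mult_left_mono gE_quad[OF s]) auto
      finally show ?thesis by (simp add: C_def mult.assoc)
    qed
    have "norm (integral\<^sup>L M f) \<le> (\<integral>z. norm (f z) \<partial>M)" by (rule integral_norm_bound)
    also have "\<dots> \<le> C * (norm (y - x))\<^sup>2"
      using intf pt by (intro integral_le_const) auto
    finally show ?thesis using eq by simp
  qed
  show ?thesis
    unfolding has_derivative_at_alt c_def[symmetric] V_def[symmetric]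
  proof (intro conjI allI impI)
    show "bounded_linear (\<lambda>k. k \<bullet> V)" by (rule bounded_linear_inner_left)
    fix e :: real assume e: "e > 0"
    show "\<exists>d>0. \<forall>y. norm (y - x) < d \<longrightarrow>
      norm ((\<integral>z. gauss_pdf \<sigma> (G z) y \<partial>M) - (\<integral>z. gauss_pdf \<sigma> (G z) x \<partial>M) - (y - x) \<bullet> V) \<le> e * norm (y - x)"
    proof (intro exI[of _ "e / (C + 1)"] conjI allI impI)
      show "e / (C + 1) > 0" using e C0 by simp
      fix y assume y: "norm (y - x) < e / (C + 1)"
      have "C * norm (y - x) \<le> e"
      proof -
        have "C * norm (y - x) \<le> (C + 1) * norm (y - x)" by (intro mult_right_mono) auto
        also have "\<dots> \<le> (C + 1) * (e / (C + 1))" using y C0 by (intro mult_left_mono) auto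
        also have "\<dots> = e" using C0 by simp
        finally show ?thesis .
      qed
      hence "C * (norm (y - x))\<^sup>2 \<le> e * norm (y - x)"
        by (simp add: power2_eq_square mult_right_mono mult.assoc[symmetric])
      thus "norm ((\<integral>z. gauss_pdf \<sigma> (G z) y \<partial>M) - (\<integral>z. gauss_pdf \<sigma> (G z) x \<partial>M) - (y - x) \<bullet> V) \<le> e * norm (y - x)"
        using bnd[of y] by simp
    qed
  qed
qed

lemma sigma_pow_gc:
  assumes s: "\<sigma> > 0"
  shows "\<sigma> ^ n * (2 * pi * \<sigma>\<^sup>2) powr (- real n / 2) = (2 * pi) powr (- real n / 2)"
proof -
  have a: "(2 * pi * \<sigma>\<^sup>2) powr (- real n / 2) = (2 * pi) powr (- real n / 2) * (\<sigma>\<^sup>2) powr (- real n / 2)"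
    using s by (simp add: powr_mult)
  have b: "(\<sigma>\<^sup>2) powr (- real n / 2) = \<sigma> powr (- real n)"
  proof -
    have "\<sigma>\<^sup>2 = \<sigma> powr 2" using s by (simp add: powr_realpow)
    hence "(\<sigma>\<^sup>2) powr (- real n / 2) = \<sigma> powr (2 * (- real n / 2))" by (simp add: powr_powr)
    thus ?thesis by simp
  qed
  have c: "\<sigma> ^ n = \<sigma> powr real n" using s by (simp add: powr_realpow)
  have d: "\<sigma> powr real n * \<sigma> powr (- real n) = 1" using s by (simp add: powr_add[symmetric])
  show ?thesis unfolding a b c using d by (simp add: algebra_simps)
qed

lemma gauss_affine:
  assumes s: "\<sigma> > 0"
  shows "\<sigma> ^ DIM('a) * gauss_pdf \<sigma> \<mu> (\<mu> + \<sigma> *\<^sub>R e) = gauss_pdf 1 0 (e :: 'a::euclidean_space)"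
proof -
  have "(norm (\<sigma> *\<^sub>R e))\<^sup>2 / (2 * \<sigma>\<^sup>2) = (norm e)\<^sup>2 / 2"
    using s by (simp add: power_mult_distrib)
  thus ?thesis
    unfolding gauss_pdf_def using sigma_pow_gc[OF s, of "DIM('a)"]
    by (simp add: mult.assoc[symmetric])
qed

lemma affine_change:
  fixes F :: "'a::euclidean_space \<Rightarrow> ennreal"
  assumes s: "\<sigma> > 0" and F[measurable]: "F \<in> borel_measurable borel"
  shows "(\<integral>\<^sup>+ e. ennreal (gauss_pdf 1 0 e) * F (\<mu> + \<sigma> *\<^sub>R e) \<partial>lborel)
       = (\<integral>\<^sup>+ x. ennreal (gauss_pdf \<sigma> \<mu> x) * F x \<partial>lborel)"
proof -
  have eq: "lborel = density (distr lborel borel (\<lambda>x. \<mu> + \<sigma> *\<^sub>R x)) (\<lambda>_. \<bar>\<sigma>\<bar> ^ DIM('a))"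
    using s by (intro lborel_affine) simp
  have gm[measurable]: "(\<lambda>x. gauss_pdf \<sigma> \<mu> x) \<in> borel_measurable (borel :: 'a measure)"
    unfolding gauss_pdf_def by measurable
  have "(\<integral>\<^sup>+ x. ennreal (gauss_pdf \<sigma> \<mu> x) * F x \<partial>lborel)
      = (\<integral>\<^sup>+ x. ennreal (gauss_pdf \<sigma> \<mu> x) * F x \<partial>(density (distr lborel borel (\<lambda>x. \<mu> + \<sigma> *\<^sub>R x)) (\<lambda>_. \<bar>\<sigma>\<bar> ^ DIM('a))))"
    using arg_cong[OF eq, of "\<lambda>M. \<integral>\<^sup>+ x. ennreal (gauss_pdf \<sigma> \<mu> x) * F x \<partial>M"] .
  also have "\<dots> = (\<integral>\<^sup>+ x. ennreal (\<bar>\<sigma>\<bar> ^ DIM('a)) * (ennreal (gauss_pdf \<sigma> \<mu> x) * F x) \<partial>(distr lborel borel (\<lambda>x. \<mu> + \<sigma> *\<^sub>R x)))"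
    by (rule nn_integral_density) auto
  also have "\<dots> = (\<integral>\<^sup>+ e. ennreal (\<bar>\<sigma>\<bar> ^ DIM('a)) * (ennreal (gauss_pdf \<sigma> \<mu> (\<mu> + \<sigma> *\<^sub>R e)) * F (\<mu> + \<sigma> *\<^sub>R e)) \<partial>lborel)"
    by (rule nn_integral_distr) auto
  also have "\<dots> = (\<integral>\<^sup>+ e. ennreal (gauss_pdf 1 0 e) * F (\<mu> + \<sigma> *\<^sub>R e) \<partial>lborel)"
  proof (rule nn_integral_cong)
    fix e :: 'a
    have "ennreal (\<bar>\<sigma>\<bar> ^ DIM('a)) * ennreal (gauss_pdf \<sigma> \<mu> (\<mu> + \<sigma> *\<^sub>R e))
        = ennreal (\<sigma> ^ DIM('a) * gauss_pdf \<sigma> \<mu> (\<mu> + \<sigma> *\<^sub>R e))"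
    proof -
      have "gauss_pdf \<sigma> \<mu> (\<mu> + \<sigma> *\<^sub>R e) \<ge> 0" by (simp add: gauss_pdf_def)
      thus ?thesis using s by (simp add: ennreal_mult)
    qed
    also have "\<dots> = ennreal (gauss_pdf 1 0 e)" using gauss_affine[OF s, of \<mu> e] by simp
    finally show "ennreal (\<bar>\<sigma>\<bar> ^ DIM('a)) * (ennreal (gauss_pdf \<sigma> \<mu> (\<mu> + \<sigma> *\<^sub>R e)) * F (\<mu> + \<sigma> *\<^sub>R e))
        = ennreal (gauss_pdf 1 0 e) * F (\<mu> + \<sigma> *\<^sub>R e)"
      by (simp add: mult.assoc[symmetric])
  qed
  finally show ?thesis ..
qed

lemma sets_std_gauss[simp, measurable_cong]: "sets (std_gauss :: 'a::euclidean_space measure) = sets borel"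
  by (simp add: std_gauss_def)

lemma space_std_gauss[simp]: "space (std_gauss :: 'a::euclidean_space measure) = UNIV"
  by (simp add: std_gauss_def)

lemma sf_std_gauss: "sigma_finite_measure (std_gauss :: 'a::euclidean_space measure)"
  unfolding std_gauss_def
  by (subst sigma_finite_measure.sigma_finite_iff_density_finite[OF sigma_finite_lborel]) (auto simp: gauss_pdf_def)

lemma gauss_meas_pair[measurable]:
  assumes [measurable]: "M \<in> borel_measurable N" "X \<in> borel_measurable N"
  shows "(\<lambda>w. gauss_pdf \<sigma> (M w :: 'a::euclidean_space) (X w)) \<in> borel_measurable N"
  unfolding gauss_pdf_def by measurable

lemma LJ:
  fixes Z :: "'z measure" and G :: "'z \<Rightarrow> 'a::euclidean_space"
  assumes G[measurable]: "G \<in> borel_measurable Z" and s: "\<sigma> > 0"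
    and f[measurable]: "f \<in> borel_measurable (Z \<Otimes>\<^sub>M lborel)"
  shows "(\<integral>\<^sup>+ w. f (fst w, G (fst w) + \<sigma> *\<^sub>R snd w) \<partial>(Z \<Otimes>\<^sub>M std_gauss))
       = (\<integral>\<^sup>+ w. ennreal (gauss_pdf \<sigma> (G (fst w)) (snd w)) * f w \<partial>(Z \<Otimes>\<^sub>M lborel))"
proof -
  interpret N: sigma_finite_measure "std_gauss :: 'a measure" by (rule sf_std_gauss)
  have [measurable]: "(\<lambda>w. (fst w, G (fst w) + \<sigma> *\<^sub>R snd w)) \<in> measurable (Z \<Otimes>\<^sub>M std_gauss) (Z \<Otimes>\<^sub>M lborel)"
    by measurable
  have "(\<integral>\<^sup>+ w. f (fst w, G (fst w) + \<sigma> *\<^sub>R snd w) \<partial>(Z \<Otimes>\<^sub>M std_gauss))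
      = (\<integral>\<^sup>+ z. \<integral>\<^sup>+ e. f (z, G z + \<sigma> *\<^sub>R e) \<partial>std_gauss \<partial>Z)"
    by (subst N.nn_integral_fst[symmetric]) auto
  also have "\<dots> = (\<integral>\<^sup>+ z. \<integral>\<^sup>+ x. ennreal (gauss_pdf \<sigma> (G z) x) * f (z, x) \<partial>lborel \<partial>Z)"
  proof (rule nn_integral_cong)
    fix z assume z: "z \<in> space Z"
    have fz[measurable]: "(\<lambda>x. f (z, x)) \<in> borel_measurable borel"
      using measurable_Pair2[OF f z] by simp
    have "(\<integral>\<^sup>+ e. f (z, G z + \<sigma> *\<^sub>R e) \<partial>std_gauss) = (\<integral>\<^sup>+ e. ennreal (gauss_pdf 1 0 e) * f (z, G z + \<sigma> *\<^sub>R e) \<partial>lborel)"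
      unfolding std_gauss_def by (rule nn_integral_density) auto
    also have "\<dots> = (\<integral>\<^sup>+ x. ennreal (gauss_pdf \<sigma> (G z) x) * f (z, x) \<partial>lborel)"
      by (rule affine_change[OF s fz])
    finally show "(\<integral>\<^sup>+ e. f (z, G z + \<sigma> *\<^sub>R e) \<partial>std_gauss) = (\<integral>\<^sup>+ x. ennreal (gauss_pdf \<sigma> (G z) x) * f (z, x) \<partial>lborel)" .
  qed
  also have "\<dots> = (\<integral>\<^sup>+ w. ennreal (gauss_pdf \<sigma> (G (fst w)) (snd w)) * f w \<partial>(Z \<Otimes>\<^sub>M lborel))"
    by (subst lborel.nn_integral_fst[symmetric]) auto
  finally show ?thesis .
qed

lemma distr_eq_density:
  fixes Z :: "'z measure" and G :: "'z \<Rightarrow> 'a::euclidean_space"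
  assumes G[measurable]: "G \<in> borel_measurable Z" and s: "\<sigma> > 0"
  shows "distr (Z \<Otimes>\<^sub>M std_gauss) (Z \<Otimes>\<^sub>M lborel) (\<lambda>w. (fst w, G (fst w) + \<sigma> *\<^sub>R snd w))
       = density (Z \<Otimes>\<^sub>M lborel) (\<lambda>w. ennreal (gauss_pdf \<sigma> (G (fst w)) (snd w)))"
proof (rule measure_eqI)
  show "sets (distr (Z \<Otimes>\<^sub>M std_gauss) (Z \<Otimes>\<^sub>M lborel) (\<lambda>w. (fst w, G (fst w) + \<sigma> *\<^sub>R snd w)))
      = sets (density (Z \<Otimes>\<^sub>M lborel) (\<lambda>w. ennreal (gauss_pdf \<sigma> (G (fst w)) (snd w))))" by simp
  fix A assume "A \<in> sets (distr (Z \<Otimes>\<^sub>M std_gauss) (Z \<Otimes>\<^sub>M lborel) (\<lambda>w. (fst w, G (fst w) + \<sigma> *\<^sub>R snd w)))"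
  hence A[measurable]: "A \<in> sets (Z \<Otimes>\<^sub>M lborel)" by simp
  have A2: "A \<in> sets (Z \<Otimes>\<^sub>M borel)"
    using A sets_pair_measure_cong[OF refl sets_lborel, of Z] by simp
  have Phi[measurable]: "(\<lambda>w. (fst w, G (fst w) + \<sigma> *\<^sub>R snd w)) \<in> measurable (Z \<Otimes>\<^sub>M std_gauss) (Z \<Otimes>\<^sub>M lborel)"
    by measurable
  have "emeasure (distr (Z \<Otimes>\<^sub>M std_gauss) (Z \<Otimes>\<^sub>M lborel) (\<lambda>w. (fst w, G (fst w) + \<sigma> *\<^sub>R snd w))) A
      = (\<integral>\<^sup>+ w. indicator A w \<partial>(distr (Z \<Otimes>\<^sub>M std_gauss) (Z \<Otimes>\<^sub>M lborel) (\<lambda>w. (fst w, G (fst w) + \<sigma> *\<^sub>R snd w))))"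
    using A by simp
  also have "\<dots> = (\<integral>\<^sup>+ w. indicator A (fst w, G (fst w) + \<sigma> *\<^sub>R snd w) \<partial>(Z \<Otimes>\<^sub>M std_gauss))"
    by (rule nn_integral_distr[OF Phi]) (use A2 in simp)
  also have "\<dots> = (\<integral>\<^sup>+ w. ennreal (gauss_pdf \<sigma> (G (fst w)) (snd w)) * indicator A w \<partial>(Z \<Otimes>\<^sub>M lborel))"
    by (rule LJ[OF G s]) (rule borel_measurable_indicator[OF A])
  also have "\<dots> = emeasure (density (Z \<Otimes>\<^sub>M lborel) (\<lambda>w. ennreal (gauss_pdf \<sigma> (G (fst w)) (snd w)))) A"
    by (rule emeasure_density[symmetric]) (use A in auto)
  finally show "emeasure (distr (Z \<Otimes>\<^sub>M std_gauss) (Z \<Otimes>\<^sub>M lborel) (\<lambda>w. (fst w, G (fst w) + \<sigma> *\<^sub>R snd w))) A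
      = emeasure (density (Z \<Otimes>\<^sub>M lborel) (\<lambda>w. ennreal (gauss_pdf \<sigma> (G (fst w)) (snd w)))) A" .
qed

lemma RT:
  fixes Z :: "'z measure" and G :: "'z \<Rightarrow> 'a::euclidean_space" and \<psi> :: "'z \<times> 'a \<Rightarrow> real"
  assumes G[measurable]: "G \<in> borel_measurable Z" and s: "\<sigma> > 0"
    and psi[measurable]: "\<psi> \<in> borel_measurable (Z \<Otimes>\<^sub>M lborel)"
    and int: "integrable (Z \<Otimes>\<^sub>M std_gauss) (\<lambda>w. \<psi> (fst w, G (fst w) + \<sigma> *\<^sub>R snd w))"
  shows "integrable (Z \<Otimes>\<^sub>M lborel) (\<lambda>w. gauss_pdf \<sigma> (G (fst w)) (snd w) * \<psi> w)"
    and "(\<integral>w. \<psi> (fst w, G (fst w) + \<sigma> *\<^sub>R snd w) \<partial>(Z \<Otimes>\<^sub>M std_gauss))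
       = (\<integral>w. gauss_pdf \<sigma> (G (fst w)) (snd w) * \<psi> w \<partial>(Z \<Otimes>\<^sub>M lborel))"
proof -
  have Phi[measurable]: "(\<lambda>w. (fst w, G (fst w) + \<sigma> *\<^sub>R snd w)) \<in> measurable (Z \<Otimes>\<^sub>M std_gauss) (Z \<Otimes>\<^sub>M lborel)"
    by measurable
  have nn: "AE w in Z \<Otimes>\<^sub>M lborel. 0 \<le> gauss_pdf \<sigma> (G (fst w)) (snd w)"
    by (auto simp: gauss_pdf_def)
  have "integrable (distr (Z \<Otimes>\<^sub>M std_gauss) (Z \<Otimes>\<^sub>M lborel) (\<lambda>w. (fst w, G (fst w) + \<sigma> *\<^sub>R snd w))) \<psi>"
    using int by (subst integrable_distr_eq[OF Phi psi])
  hence "integrable (density (Z \<Otimes>\<^sub>M lborel) (\<lambda>w. ennreal (gauss_pdf \<sigma> (G (fst w)) (snd w)))) \<psi>"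
    unfolding distr_eq_density[OF G s] .
  thus "integrable (Z \<Otimes>\<^sub>M lborel) (\<lambda>w. gauss_pdf \<sigma> (G (fst w)) (snd w) * \<psi> w)"
    by (subst (asm) integrable_density[OF psi _ nn]) auto
  have "(\<integral>w. \<psi> (fst w, G (fst w) + \<sigma> *\<^sub>R snd w) \<partial>(Z \<Otimes>\<^sub>M std_gauss))
      = integral\<^sup>L (distr (Z \<Otimes>\<^sub>M std_gauss) (Z \<Otimes>\<^sub>M lborel) (\<lambda>w. (fst w, G (fst w) + \<sigma> *\<^sub>R snd w))) \<psi>"
    by (rule integral_distr[OF Phi psi, symmetric])
  also have "\<dots> = integral\<^sup>L (density (Z \<Otimes>\<^sub>M lborel) (\<lambda>w. ennreal (gauss_pdf \<sigma> (G (fst w)) (snd w)))) \<psi>"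
    unfolding distr_eq_density[OF G s] ..
  also have "\<dots> = (\<integral>w. gauss_pdf \<sigma> (G (fst w)) (snd w) * \<psi> w \<partial>(Z \<Otimes>\<^sub>M lborel))"
    by (subst integral_density[OF psi _ nn]) auto
  finally show "(\<integral>w. \<psi> (fst w, G (fst w) + \<sigma> *\<^sub>R snd w) \<partial>(Z \<Otimes>\<^sub>M std_gauss))
       = (\<integral>w. gauss_pdf \<sigma> (G (fst w)) (snd w) * \<psi> w \<partial>(Z \<Otimes>\<^sub>M lborel))" .
qed

lemma P_pos:
  fixes M :: "'z measure" and G :: "'z \<Rightarrow> 'a::euclidean_space"
  assumes M: "prob_space M" and G[measurable]: "G \<in> borel_measurable M" and s: "\<sigma> > 0"
  shows "0 < (\<integral>z. gauss_pdf \<sigma> (G z) x \<partial>M)"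
proof -
  interpret prob_space M by fact
  have pos: "gauss_pdf \<sigma> \<mu> x > 0" for \<mu> :: 'a unfolding gauss_gE using gc_pos'[OF s, where 'a='a] gE_pos
    by (intro mult_pos_pos) auto
  have int: "integrable M (\<lambda>z. gauss_pdf \<sigma> (G z) x)" by (rule P_int(1)[OF M G s])
  have nn: "AE z in M. 0 \<le> gauss_pdf \<sigma> (G z) x" using pos by (intro AE_I2) (simp add: less_imp_le)
  have "(\<integral>z. gauss_pdf \<sigma> (G z) x \<partial>M) \<noteq> 0"
  proof
    assume "(\<integral>z. gauss_pdf \<sigma> (G z) x \<partial>M) = 0"
    hence "AE z in M. gauss_pdf \<sigma> (G z) x = 0" using integral_nonneg_eq_0_iff_AE[OF int nn] by simp
    hence "AE z in M. False"
    proof (rule AE_mp)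
      show "AE z in M. gauss_pdf \<sigma> (G z) x = 0 \<longrightarrow> False" using pos[of "G _"] by (intro AE_I2) (metis less_irrefl)
    qed
    thus False using AE_False by simp
  qed
  moreover have "0 \<le> (\<integral>z. gauss_pdf \<sigma> (G z) x \<partial>M)" by (rule integral_nonneg_AE[OF nn])
  ultimately show ?thesis by linarith
qed

lemma score_identity:
  fixes pZ :: "'z measure" and g :: "'p \<Rightarrow> 'z \<Rightarrow> 'a::euclidean_space"
  assumes M: "prob_space pZ" and G[measurable]: "g \<theta> \<in> borel_measurable pZ" and s: "\<sigma> > 0"
  shows "noised_density g pZ \<sigma> \<theta> x *\<^sub>R score g pZ \<sigma> \<theta> x
       = (\<integral>z. gauss_pdf \<sigma> (g \<theta> z) x *\<^sub>R cond_score \<sigma> (g \<theta> z) x \<partial>pZ)"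
proof -
  define V where "V = (\<integral>z. gc \<sigma> TYPE('a) *\<^sub>R dE \<sigma> (x - g \<theta> z) \<partial>pZ)"
  have nd: "noised_density g pZ \<sigma> \<theta> = (\<lambda>y. \<integral>z. gauss_pdf \<sigma> (g \<theta> z) y \<partial>pZ)"
    by (rule ext) (simp add: noised_density_def)
  have d: "GDERIV (noised_density g pZ \<sigma> \<theta>) x :> V"
    unfolding gderiv_def nd V_def by (rule P_deriv[OF M G s])
  have pos: "noised_density g pZ \<sigma> \<theta> x > 0" unfolding nd by (rule P_pos[OF M G s])
  have "GDERIV (\<lambda>y. ln (noised_density g pZ \<sigma> \<theta> y)) x :> inverse (noised_density g pZ \<sigma> \<theta> x) *\<^sub>R V"
    by (rule GDERIV_DERIV_compose[OF d DERIV_ln[OF pos]])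
  hence "score g pZ \<sigma> \<theta> x = inverse (noised_density g pZ \<sigma> \<theta> x) *\<^sub>R V"
    unfolding score_def by (rule grad_eqI)
  hence "noised_density g pZ \<sigma> \<theta> x *\<^sub>R score g pZ \<sigma> \<theta> x = V" using pos by simp
  also have "V = (\<integral>z. gauss_pdf \<sigma> (g \<theta> z) x *\<^sub>R cond_score \<sigma> (g \<theta> z) x \<partial>pZ)"
    unfolding V_def by (rule Bochner_Integration.integral_cong) (simp_all add: cond_score_eq[OF s])
  finally show ?thesis .
qed

theorem theorem1:
  fixes g :: "'p::euclidean_space \<Rightarrow> 'z::euclidean_space \<Rightarrow> 'd::euclidean_space"
    and pZ :: "'z measure"
    and \<sigma> :: real
    and sq :: "'d \<Rightarrow> 'd"
    and p :: "'p \<Rightarrow> 'd \<Rightarrow> real"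
    and s :: "'p \<Rightarrow> 'd \<Rightarrow> 'd"
    and \<theta>0 :: 'p
    and U :: "'p set"
    and Dp :: "'d \<Rightarrow> 'p \<Rightarrow> real"
    and Ds :: "'d \<Rightarrow> 'p \<Rightarrow> 'd"
  assumes pZ: "prob_space pZ" "sets pZ = sets borel"
    and sigma_pos: "\<sigma> > 0"
    and p_def: "p = noised_density g pZ \<sigma>"
    and s_def: "s = score g pZ \<sigma>"
    and g_meas: "\<And>\<theta>. g \<theta> \<in> borel_measurable pZ"
    and sq_diff: "\<And>x. sq differentiable (at x)"
    and s_meas: "\<And>\<theta>. s \<theta> \<in> borel_measurable borel"
    and U: "open U" "\<theta>0 \<in> U"
    \<comment> \<open>differentiability of p and s in theta at theta0 (for every x)\<close>
    and p_diff: "\<And>x. ((\<lambda>\<theta>. p \<theta> x) has_derivative Dp x) (at \<theta>0)"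
    and s_diff: "\<And>x. ((\<lambda>\<theta>. s \<theta> x) has_derivative Ds x) (at \<theta>0)"
    \<comment> \<open>integrability near theta0\<close>
    and int1: "\<And>\<theta>. \<theta> \<in> U \<Longrightarrow> integrable (pZ \<Otimes>\<^sub>M std_gauss)
        (\<lambda>ze. let x = g \<theta> (fst ze) + \<sigma> *\<^sub>R snd ze in
              norm (sq x - s \<theta>0 x) * norm (s \<theta>0 x))"
    and int2: "\<And>\<theta>. \<theta> \<in> U \<Longrightarrow> integrable (pZ \<Otimes>\<^sub>M std_gauss)
        (\<lambda>ze. let x0 = g \<theta> (fst ze); x = x0 + \<sigma> *\<^sub>R snd ze in
              norm (sq x - s \<theta>0 x) * norm (cond_score \<sigma> x0 x))"
    and int3: "\<And>u. integrable lborel (\<lambda>x. Dp x u * ((sq x - s \<theta>0 x) \<bullet> s \<theta>0 x))"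
    and int4: "\<And>u. integrable lborel (\<lambda>x. p \<theta>0 x * ((sq x - s \<theta>0 x) \<bullet> Ds x u))"
    \<comment> \<open>permissibility of exchanging differentiation in theta and expectation over x ~ p_theta\<close>
    and exch1: "((\<lambda>\<theta>. \<integral>x. p \<theta> x * ((sq x - s \<theta>0 x) \<bullet> s \<theta>0 x) \<partial>lborel) has_derivative
                 (\<lambda>u. \<integral>x. Dp x u * ((sq x - s \<theta>0 x) \<bullet> s \<theta>0 x) \<partial>lborel)) (at \<theta>0)"
    and exch2: "((\<lambda>\<theta>. \<integral>x. p \<theta> x * ((sq x - s \<theta>0 x) \<bullet> s \<theta> x) \<partial>lborel) has_derivative
                 (\<lambda>u. \<integral>x. Dp x u * ((sq x - s \<theta>0 x) \<bullet> s \<theta>0 x)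
                          + p \<theta>0 x * ((sq x - s \<theta>0 x) \<bullet> Ds x u) \<partial>lborel)) (at \<theta>0)"
  shows "((\<lambda>\<theta>. F_obj sq g pZ \<sigma> \<theta> \<theta>0) has_derivative
           (\<lambda>u. \<integral>x. p \<theta>0 x * (- 2 * ((sq x - s \<theta>0 x) \<bullet> Ds x u)) \<partial>lborel)) (at \<theta>0)"
proof -
  interpret Z: prob_space pZ by (rule pZ(1))
  interpret PL: pair_sigma_finite pZ "lborel :: 'd measure"
    by (intro pair_sigma_finite.intro prob_space_imp_sigma_finite pZ(1) sigma_finite_lborel)
  have sq_cont: "continuous_on UNIV sq"
    by (metis continuous_at_imp_continuous_on differentiable_imp_continuous_within sq_diff)
  have sq_m[measurable]: "sq \<in> borel_measurable borel"
    by (rule borel_measurable_continuous_onI[OF sq_cont])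
  have s_m[measurable]: "s \<theta>0 \<in> borel_measurable borel" by (rule s_meas)
  have cs: "cond_score \<sigma> \<mu> x = (1 / \<sigma>\<^sup>2) *\<^sub>R (\<mu> - x)" for \<mu> x :: 'd
    by (rule cond_score_norm[OF sigma_pos])
  define A where "A \<theta> = (\<integral>x. p \<theta> x * ((sq x - s \<theta>0 x) \<bullet> s \<theta>0 x) \<partial>lborel)" for \<theta>
  define B where "B \<theta> = (\<integral>x. p \<theta> x * ((sq x - s \<theta>0 x) \<bullet> s \<theta> x) \<partial>lborel)" for \<theta>
  have key: "F_obj sq g pZ \<sigma> \<theta> \<theta>0 = 2 * A \<theta> - 2 * B \<theta>" if \<theta>U: "\<theta> \<in> U" for \<theta>
  proof -
    define G where "G = g \<theta>"
    have G[measurable]: "G \<in> borel_measurable pZ" unfolding G_def by (rule g_meas)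
    have sth[measurable]: "s \<theta> \<in> borel_measurable borel" by (rule s_meas)
    define \<psi>1 where "\<psi>1 w = (sq (snd w) - s \<theta>0 (snd w)) \<bullet> s \<theta>0 (snd w)" for w :: "'z \<times> 'd"
    define \<psi>2 where "\<psi>2 w = (sq (snd w) - s \<theta>0 (snd w)) \<bullet> ((1 / \<sigma>\<^sup>2) *\<^sub>R (G (fst w) - snd w))" for w :: "'z \<times> 'd"
    have m1[measurable]: "\<psi>1 \<in> borel_measurable (pZ \<Otimes>\<^sub>M lborel)" unfolding \<psi>1_def by measurable
    have m2[measurable]: "\<psi>2 \<in> borel_measurable (pZ \<Otimes>\<^sub>M lborel)" unfolding \<psi>2_def by measurable
    have i1: "integrable (pZ \<Otimes>\<^sub>M std_gauss) (\<lambda>w. \<psi>1 (fst w, G (fst w) + \<sigma> *\<^sub>R snd w))"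
    proof (rule Bochner_Integration.integrable_bound[OF int1[OF \<theta>U]])
      show "(\<lambda>w. \<psi>1 (fst w, G (fst w) + \<sigma> *\<^sub>R snd w)) \<in> borel_measurable (pZ \<Otimes>\<^sub>M std_gauss)"
        unfolding \<psi>1_def by measurable
      show "AE w in pZ \<Otimes>\<^sub>M std_gauss. norm (\<psi>1 (fst w, G (fst w) + \<sigma> *\<^sub>R snd w))
          \<le> norm (let x = g \<theta> (fst w) + \<sigma> *\<^sub>R snd w in norm (sq x - s \<theta>0 x) * norm (s \<theta>0 x))"
        by (intro AE_I2) (simp add: \<psi>1_def G_def Let_def Cauchy_Schwarz_ineq2)
    qed
    have i2: "integrable (pZ \<Otimes>\<^sub>M std_gauss) (\<lambda>w. \<psi>2 (fst w, G (fst w) + \<sigma> *\<^sub>R snd w))"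
    proof (rule Bochner_Integration.integrable_bound[OF int2[OF \<theta>U]])
      show "(\<lambda>w. \<psi>2 (fst w, G (fst w) + \<sigma> *\<^sub>R snd w)) \<in> borel_measurable (pZ \<Otimes>\<^sub>M std_gauss)"
        unfolding \<psi>2_def by measurable
      show "AE w in pZ \<Otimes>\<^sub>M std_gauss. norm (\<psi>2 (fst w, G (fst w) + \<sigma> *\<^sub>R snd w))
          \<le> norm (let x0 = g \<theta> (fst w); x = x0 + \<sigma> *\<^sub>R snd w in norm (sq x - s \<theta>0 x) * norm (cond_score \<sigma> x0 x))"
      proof (intro AE_I2)
        fix w :: "'z \<times> 'd"
        have e1: "\<psi>2 (fst w, G (fst w) + \<sigma> *\<^sub>R snd w) = (sq (g \<theta> (fst w) + \<sigma> *\<^sub>R snd w) - s \<theta>0 (g \<theta> (fst w) + \<sigma> *\<^sub>R snd w))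
             \<bullet> cond_score \<sigma> (g \<theta> (fst w)) (g \<theta> (fst w) + \<sigma> *\<^sub>R snd w)"
          by (simp only: \<psi>2_def G_def cs fst_conv snd_conv)
        show "norm (\<psi>2 (fst w, G (fst w) + \<sigma> *\<^sub>R snd w))
          \<le> norm (let x0 = g \<theta> (fst w); x = x0 + \<sigma> *\<^sub>R snd w in norm (sq x - s \<theta>0 x) * norm (cond_score \<sigma> x0 x))"
          unfolding e1 Let_def by (simp add: Cauchy_Schwarz_ineq2)
      qed
    qed
    have F_eq: "F_obj sq g pZ \<sigma> \<theta> \<theta>0 = (\<integral>w. 2 * \<psi>1 (fst w, G (fst w) + \<sigma> *\<^sub>R snd w) - 2 * \<psi>2 (fst w, G (fst w) + \<sigma> *\<^sub>R snd w) \<partial>(pZ \<Otimes>\<^sub>M std_gauss))"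
      unfolding F_obj_def s_def[symmetric]
      by (intro Bochner_Integration.integral_cong refl) (simp only: Let_def \<psi>1_def \<psi>2_def G_def cs fst_conv snd_conv inner_diff_right right_diff_distrib)
    also have "\<dots> = 2 * (\<integral>w. \<psi>1 (fst w, G (fst w) + \<sigma> *\<^sub>R snd w) \<partial>(pZ \<Otimes>\<^sub>M std_gauss))
                  - 2 * (\<integral>w. \<psi>2 (fst w, G (fst w) + \<sigma> *\<^sub>R snd w) \<partial>(pZ \<Otimes>\<^sub>M std_gauss))"
      using i1 i2 by simp
    also have "(\<integral>w. \<psi>1 (fst w, G (fst w) + \<sigma> *\<^sub>R snd w) \<partial>(pZ \<Otimes>\<^sub>M std_gauss)) = A \<theta>"
    proof -
      have j: "integrable (pZ \<Otimes>\<^sub>M lborel) (\<lambda>w. gauss_pdf \<sigma> (G (fst w)) (snd w) * \<psi>1 w)"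
        by (rule RT(1)[OF G sigma_pos m1 i1])
      have cp: "(\<lambda>w. gauss_pdf \<sigma> (G (fst w)) (snd w) * \<psi>1 w) = case_prod (\<lambda>z x. gauss_pdf \<sigma> (G z) x * \<psi>1 (z, x))"
        by (rule ext) (simp add: split_beta)
      have "(\<integral>w. \<psi>1 (fst w, G (fst w) + \<sigma> *\<^sub>R snd w) \<partial>(pZ \<Otimes>\<^sub>M std_gauss))
          = (\<integral>w. gauss_pdf \<sigma> (G (fst w)) (snd w) * \<psi>1 w \<partial>(pZ \<Otimes>\<^sub>M lborel))"
        by (rule RT(2)[OF G sigma_pos m1 i1])
      also have "\<dots> = (\<integral>x. (\<integral>z. gauss_pdf \<sigma> (G z) x * \<psi>1 (z, x) \<partial>pZ) \<partial>lborel)"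
        unfolding cp by (rule PL.integral_snd[symmetric]) (use j cp in simp)
      also have "\<dots> = A \<theta>"
        unfolding A_def
        by (intro Bochner_Integration.integral_cong refl) (simp add: \<psi>1_def p_def noised_density_def G_def)
      finally show ?thesis .
    qed
    also have "(\<integral>w. \<psi>2 (fst w, G (fst w) + \<sigma> *\<^sub>R snd w) \<partial>(pZ \<Otimes>\<^sub>M std_gauss)) = B \<theta>"
    proof -
      have j: "integrable (pZ \<Otimes>\<^sub>M lborel) (\<lambda>w. gauss_pdf \<sigma> (G (fst w)) (snd w) * \<psi>2 w)"
        by (rule RT(1)[OF G sigma_pos m2 i2])
      have cp: "(\<lambda>w. gauss_pdf \<sigma> (G (fst w)) (snd w) * \<psi>2 w) = case_prod (\<lambda>z x. gauss_pdf \<sigma> (G z) x * \<psi>2 (z, x))"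
        by (rule ext) (simp add: split_beta)
      have "(\<integral>w. \<psi>2 (fst w, G (fst w) + \<sigma> *\<^sub>R snd w) \<partial>(pZ \<Otimes>\<^sub>M std_gauss))
          = (\<integral>w. gauss_pdf \<sigma> (G (fst w)) (snd w) * \<psi>2 w \<partial>(pZ \<Otimes>\<^sub>M lborel))"
        by (rule RT(2)[OF G sigma_pos m2 i2])
      also have "\<dots> = (\<integral>x. (\<integral>z. gauss_pdf \<sigma> (G z) x * \<psi>2 (z, x) \<partial>pZ) \<partial>lborel)"
        unfolding cp by (rule PL.integral_snd[symmetric]) (use j cp in simp)
      also have "\<dots> = B \<theta>"
        unfolding B_def
      proof (intro Bochner_Integration.integral_cong refl)
        fix x :: 'd
        have ic: "integrable pZ (\<lambda>z. gauss_pdf \<sigma> (G z) x *\<^sub>R cond_score \<sigma> (G z) x)"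
          using P_int(2)[OF pZ(1) G sigma_pos, of x] by (simp add: cond_score_eq[OF sigma_pos])
        have "(\<integral>z. gauss_pdf \<sigma> (G z) x * \<psi>2 (z, x) \<partial>pZ)
            = (\<integral>z. (sq x - s \<theta>0 x) \<bullet> (gauss_pdf \<sigma> (G z) x *\<^sub>R cond_score \<sigma> (G z) x) \<partial>pZ)"
          by (intro Bochner_Integration.integral_cong refl) (simp add: \<psi>2_def cs)
        also have "\<dots> = (sq x - s \<theta>0 x) \<bullet> (\<integral>z. gauss_pdf \<sigma> (G z) x *\<^sub>R cond_score \<sigma> (G z) x \<partial>pZ)"
          using ic by (rule integral_inner_right)
        also have "(\<integral>z. gauss_pdf \<sigma> (G z) x *\<^sub>R cond_score \<sigma> (G z) x \<partial>pZ) = p \<theta> x *\<^sub>R s \<theta> x"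
          unfolding p_def s_def G_def by (rule score_identity[OF pZ(1) g_meas sigma_pos, symmetric])
        finally show "(\<integral>z. gauss_pdf \<sigma> (G z) x * \<psi>2 (z, x) \<partial>pZ) = p \<theta> x * ((sq x - s \<theta>0 x) \<bullet> s \<theta> x)"
          by simp
      qed
      finally show ?thesis .
    qed
    finally show ?thesis .
  qed
  have dAB: "((\<lambda>\<theta>. 2 * A \<theta> - 2 * B \<theta>) has_derivative
      (\<lambda>u. 2 * (\<integral>x. Dp x u * ((sq x - s \<theta>0 x) \<bullet> s \<theta>0 x) \<partial>lborel)
         - 2 * (\<integral>x. Dp x u * ((sq x - s \<theta>0 x) \<bullet> s \<theta>0 x) + p \<theta>0 x * ((sq x - s \<theta>0 x) \<bullet> Ds x u) \<partial>lborel))) (at \<theta>0)"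
    unfolding A_def B_def
    by (intro has_derivative_diff has_derivative_mult_right exch1 exch2)
  have rhs: "(\<lambda>u. 2 * (\<integral>x. Dp x u * ((sq x - s \<theta>0 x) \<bullet> s \<theta>0 x) \<partial>lborel)
         - 2 * (\<integral>x. Dp x u * ((sq x - s \<theta>0 x) \<bullet> s \<theta>0 x) + p \<theta>0 x * ((sq x - s \<theta>0 x) \<bullet> Ds x u) \<partial>lborel))
      = (\<lambda>u. \<integral>x. p \<theta>0 x * (- 2 * ((sq x - s \<theta>0 x) \<bullet> Ds x u)) \<partial>lborel)"
  proof (rule ext)
    fix u
    have "(\<integral>x. Dp x u * ((sq x - s \<theta>0 x) \<bullet> s \<theta>0 x) + p \<theta>0 x * ((sq x - s \<theta>0 x) \<bullet> Ds x u) \<partial>lborel)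
        = (\<integral>x. Dp x u * ((sq x - s \<theta>0 x) \<bullet> s \<theta>0 x) \<partial>lborel) + (\<integral>x. p \<theta>0 x * ((sq x - s \<theta>0 x) \<bullet> Ds x u) \<partial>lborel)"
      by (rule Bochner_Integration.integral_add[OF int3 int4])
    moreover have "(\<integral>x. p \<theta>0 x * (- 2 * ((sq x - s \<theta>0 x) \<bullet> Ds x u)) \<partial>lborel)
        = (\<integral>x. (- 2) * (p \<theta>0 x * ((sq x - s \<theta>0 x) \<bullet> Ds x u)) \<partial>lborel)"
      by (intro Bochner_Integration.integral_cong refl) (simp add: algebra_simps)
    moreover have "\<dots> = (- 2) * (\<integral>x. p \<theta>0 x * ((sq x - s \<theta>0 x) \<bullet> Ds x u) \<partial>lborel)"
      by (rule integral_mult_right_zero)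
    ultimately show "2 * (\<integral>x. Dp x u * ((sq x - s \<theta>0 x) \<bullet> s \<theta>0 x) \<partial>lborel)
         - 2 * (\<integral>x. Dp x u * ((sq x - s \<theta>0 x) \<bullet> s \<theta>0 x) + p \<theta>0 x * ((sq x - s \<theta>0 x) \<bullet> Ds x u) \<partial>lborel)
      = (\<integral>x. p \<theta>0 x * (- 2 * ((sq x - s \<theta>0 x) \<bullet> Ds x u)) \<partial>lborel)"
      by simp
  qed
  show ?thesis
    using has_derivative_transform_within_open[OF dAB[unfolded rhs] U(1) U(2), of "\<lambda>\<theta>. F_obj sq g pZ \<sigma> \<theta> \<theta>0"]
      key by simp
qed

end
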